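(* Let $k\ge 1$ and a budget $p$ be given. For $j=1,\dots,k$ let $c_{a,j},c_{c,j}>0$, let $r_{a,j}:(0,\infty)\to(0,\infty)$ be positive, decreasing and at least twice continuously differentiable, and let $r_{c,j}:(0,\infty)\to(0,\infty)$ be positive, increasing and at least twice continuously differentiable. Let $w_j:(0,\infty)\to(0,\infty)$ and $\rho_j:(0,\infty)\to[-1,1]$ ($j=1,\dots,k$) be given functions (cost and correlation of the $j$-th low-fidelity model as a function of its number of training samples) with $1-\rho_j^2(n)\le c_{a,j}r_{a,j}(n)$ and $w_j(n)\le c_{c,j}r_{c,j}(n)$; set $n_0=0$, $w_0=1$. For $j=1$, let $p\ge 2$, define $u_1(n_1)=\frac{1}{p-n_1}\big(c_{a,1}r_{a,1}(n_1)+c_{c,1}r_{c,1}(n_1)\big)$ on $[1,p-1]$, assume $c_{a,1}r_{a,1}''+c_{c,1}r_{c,1}''>0$ on $[1,p-1]$, and let $n_1^*$ be the unique global minimizer of $u_1$ on $[1,p-1]$. Iteratively for $j=2,\dots,k$, given $n_1^*,\dots,n_{j-1}^*$, set $$p_{j-1}=p-\sum_{i=1}^{j-1}n_i^*,\quad \kappa_{j-1}=\sum_{i=0}^{j-2}w_i(n_i^* )\big(1-\rho_{i+1}^2(n_{i+1}^* )\big),\quad \hat c_{a,j}=w_{j-1}(n_{j-1}^* )\,c_{a,j},$$ (with $n_0^*=0$, $w_0(n_0^* )=1$), and consider $$u_j:[1,p_{j-1}-1]\to(0,\infty),\qquad u_j(n_j)=\frac{1}{p_{j-1}-n_j}\Big(\kappa_{j-1}+\hat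 c_{a,j}r_{a,j}(n_j)+c_{c,j}r_{c,j}(n_j)\Big).$$ If $p_{j-1}\ge 2$ and $$\hat c_{a,j}\,r_{a,j}''(n_j)+c_{c,j}\,r_{c,j}''(n_j)>0\quad\text{for all } n_j\in[1,p_{j-1}-1],$$ then there exists a unique minimizer $n_j^*\in[1,p_{j-1}-1]$ of $u_j$.
   Context: This describes the sequential construction of a hierarchy of low-fidelity models for context-aware multi-fidelity Monte Carlo estimation: $n_j$ is the number of high-fidelity evaluations used to train the $j$-th low-fidelity model, $p$ is the total budget in units of high-fidelity evaluations, and $u_j$ is (up to constant factors) an upper bound of the estimator's mean-squared error as a function of $n_j$ with $n_1^*,\dots,n_{j-1}^*$ fixed. *)

theory Defs
  imports Complex_Main
begin

definition wstar :: "(nat \<Rightarrow> real \<Rightarrow> real) \<Rightarrow> (nat \<Rightarrow> real) \<Rightarrow> nat \<Rightarrow> real" where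
  "wstar w nstar i = (if i = 0 then 1 else w i (nstar i))"

definition pbud :: "real \<Rightarrow> (nat \<Rightarrow> real) \<Rightarrow> nat \<Rightarrow> real" where
  "pbud p nstar m = p - (\<Sum>i=1..m. nstar i)"

definition kappa :: "(nat \<Rightarrow> real \<Rightarrow> real) \<Rightarrow> (nat \<Rightarrow> real \<Rightarrow> real) \<Rightarrow> (nat \<Rightarrow> real) \<Rightarrow> nat \<Rightarrow> real" where
  "kappa w rho nstar m = (\<Sum>i<m. wstar w nstar i * (1 - (rho (Suc i) (nstar (Suc i)))\<^sup>2))"

definition uobj :: "real \<Rightarrow> (nat \<Rightarrow> real) \<Rightarrow> (nat \<Rightarrow> real) \<Rightarrow> (nat \<Rightarrow> real \<Rightarrow> real) \<Rightarrow>
    (nat \<Rightarrow> real \<Rightarrow> real) \<Rightarrow> (nat \<Rightarrow> real \<Rightarrow> real) \<Rightarrow> (nat \<Rightarrow> real \<Rightarrow> real) \<Rightarrow>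
    (nat \<Rightarrow> real) \<Rightarrow> nat \<Rightarrow> real \<Rightarrow> real" where
  "uobj p ca cc ra rc w rho nstar j n =
     (kappa w rho nstar (j - 1) + wstar w nstar (j - 1) * ca j * ra j n + cc j * rc j n)
       / (pbud p nstar (j - 1) - n)"

end

theory Submission
  imports Defs
begin

theorem proposition3:
  fixes k :: nat and p :: real
    and ca cc :: "nat \<Rightarrow> real"
    and ra ra' ra'' rc rc' rc'' w rho :: "nat \<Rightarrow> real \<Rightarrow> real"
    and nstar :: "nat \<Rightarrow> real"
    and j :: nat
  assumes k: "k \<ge> 1"
    and ca_pos: "\<And>i. i \<in> {1..k} \<Longrightarrow> ca i > 0"
    and cc_pos: "\<And>i. i \<in> {1..k} \<Longrightarrow> cc i > 0"
    and ra_pos: "\<And>i x. i \<in> {1..k} \<Longrightarrow> x > 0 \<Longrightarrow> ra i x > 0"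
    and ra_dec: "\<And>i. i \<in> {1..k} \<Longrightarrow> antimono_on {0<..} (ra i)"
    and ra_d1: "\<And>i x. i \<in> {1..k} \<Longrightarrow> x > 0 \<Longrightarrow> (ra i has_real_derivative ra' i x) (at x)"
    and ra_d2: "\<And>i x. i \<in> {1..k} \<Longrightarrow> x > 0 \<Longrightarrow> (ra' i has_real_derivative ra'' i x) (at x)"
    and ra_c2: "\<And>i. i \<in> {1..k} \<Longrightarrow> continuous_on {0<..} (ra'' i)"
    and rc_pos: "\<And>i x. i \<in> {1..k} \<Longrightarrow> x > 0 \<Longrightarrow> rc i x > 0"
    and rc_inc: "\<And>i. i \<in> {1..k} \<Longrightarrow> mono_on {0<..} (rc i)"
    and rc_d1: "\<And>i x. i \<in> {1..k} \<Longrightarrow> x > 0 \<Longrightarrow> (rc i has_real_derivative rc' i x) (at x)"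
    and rc_d2: "\<And>i x. i \<in> {1..k} \<Longrightarrow> x > 0 \<Longrightarrow> (rc' i has_real_derivative rc'' i x) (at x)"
    and rc_c2: "\<And>i. i \<in> {1..k} \<Longrightarrow> continuous_on {0<..} (rc'' i)"
    and w_pos: "\<And>i x. i \<in> {1..k} \<Longrightarrow> x > 0 \<Longrightarrow> w i x > 0"
    and rho_range: "\<And>i x. i \<in> {1..k} \<Longrightarrow> x > 0 \<Longrightarrow> rho i x \<in> {-1..1}"
    and rho_bound: "\<And>i x. i \<in> {1..k} \<Longrightarrow> x > 0 \<Longrightarrow> 1 - (rho i x)\<^sup>2 \<le> ca i * ra i x"
    and w_bound: "\<And>i x. i \<in> {1..k} \<Longrightarrow> x > 0 \<Longrightarrow> w i x \<le> cc i * rc i x"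
    and j: "j \<in> {1..k}"
    and prev_budget: "\<And>i. i \<in> {1..<j} \<Longrightarrow> pbud p nstar (i - 1) \<ge> 2"
    and prev_convex: "\<And>i n. i \<in> {1..<j} \<Longrightarrow> n \<in> {1..pbud p nstar (i - 1) - 1} \<Longrightarrow>
         wstar w nstar (i - 1) * ca i * ra'' i n + cc i * rc'' i n > 0"
    and prev_min: "\<And>i. i \<in> {1..<j} \<Longrightarrow>
         nstar i \<in> {1..pbud p nstar (i - 1) - 1} \<and>
         (\<forall>m\<in>{1..pbud p nstar (i - 1) - 1}. uobj p ca cc ra rc w rho nstar i (nstar i)
                                              \<le> uobj p ca cc ra rc w rho nstar i m)"
    and prev_unique: "\<And>i x. i \<in> {1..<j} \<Longrightarrow> x \<in> {1..pbud p nstar (i - 1) - 1} \<Longrightarrow>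
         (\<forall>m\<in>{1..pbud p nstar (i - 1) - 1}. uobj p ca cc ra rc w rho nstar i x
                                              \<le> uobj p ca cc ra rc w rho nstar i m) \<Longrightarrow> x = nstar i"
    and budget: "pbud p nstar (j - 1) \<ge> 2"
    and convex: "\<And>n. n \<in> {1..pbud p nstar (j - 1) - 1} \<Longrightarrow>
         wstar w nstar (j - 1) * ca j * ra'' j n + cc j * rc'' j n > 0"
  shows "\<exists>!x. x \<in> {1..pbud p nstar (j - 1) - 1} \<and>
           (\<forall>m\<in>{1..pbud p nstar (j - 1) - 1}. uobj p ca cc ra rc w rho nstar j x
                                                \<le> uobj p ca cc ra rc w rho nstar j m)"
proof -
  define P where "P = pbud p nstar (j - 1)"
  define A where "A = wstar w nstar (j - 1) * ca j"
  define K where "K = kappa w rho nstar (j - 1)"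
  define f where "f = (\<lambda>n. K + A * ra j n + cc j * rc j n)"
  define f1 where "f1 = (\<lambda>n. A * ra' j n + cc j * rc' j n)"
  define f2 where "f2 = (\<lambda>n. A * ra'' j n + cc j * rc'' j n)"
  define S where "S = {1..P - 1}"
  have jk: "j \<in> {1..k}" using j by simp
  have u_eq: "\<And>n. uobj p ca cc ra rc w rho nstar j n = f n / (P - n)"
    unfolding uobj_def f_def P_def K_def A_def by (simp add: algebra_simps)
  have df: "\<And>x. x > 0 \<Longrightarrow> (f has_real_derivative f1 x) (at x)"
    unfolding f_def f1_def
    by (auto intro!: derivative_eq_intros ra_d1[OF jk] rc_d1[OF jk])
  have df1: "\<And>x. x > 0 \<Longrightarrow> (f1 has_real_derivative f2 x) (at x)"
    unfolding f1_def f2_def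
    by (auto intro!: derivative_eq_intros ra_d2[OF jk] rc_d2[OF jk])
  have f2pos: "\<And>x. x \<in> S \<Longrightarrow> f2 x > 0"
    using convex unfolding f2_def S_def P_def A_def by (simp add: mult.assoc)
  have f1mono: "f1 a < f1 b" if "a \<in> S" "b \<in> S" "a < b" for a b
  proof -
    have "\<And>x. a \<le> x \<Longrightarrow> x \<le> b \<Longrightarrow> (f1 has_real_derivative f2 x) (at x)"
      using that df1 unfolding S_def by auto
    from MVT2[OF \<open>a < b\<close> this] obtain z where z: "a < z" "z < b" "f1 b - f1 a = (b - a) * f2 z"
      by blast
    have "z \<in> S" using z that unfolding S_def by auto
    then have "f2 z > 0" by (rule f2pos)
    moreover have "(b - a) * f2 z > 0" using \<open>a < b\<close> \<open>f2 z > 0\<close> by simp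
    ultimately show ?thesis using z by linarith
  qed
  have fmid: "f ((x + y) / 2) < (f x + f y) / 2" if "x \<in> S" "y \<in> S" "x < y" for x y
  proof -
    define z where "z = (x + y) / 2"
    have xz: "x < z" "z < y" using that unfolding z_def by auto
    have zS: "z \<in> S" using that xz unfolding S_def by auto
    have "\<And>t. x \<le> t \<Longrightarrow> t \<le> z \<Longrightarrow> (f has_real_derivative f1 t) (at t)"
      using that df unfolding S_def by auto
    from MVT2[OF xz(1) this] obtain a where a: "x < a" "a < z" "f z - f x = (z - x) * f1 a"
      by blast
    have "\<And>t. z \<le> t \<Longrightarrow> t \<le> y \<Longrightarrow> (f has_real_derivative f1 t) (at t)"
      using that df xz unfolding S_def by auto
    from MVT2[OF xz(2) this] obtain b where b: "z < b" "b < y" "f y - f z = (y - z) * f1 b"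
      by blast
    have aS: "a \<in> S" "b \<in> S" using a b that xz unfolding S_def by auto
    have "f1 a < f1 b" using f1mono[OF aS] a b by simp
    moreover have "z - x = y - z" "z - x > 0" unfolding z_def using that by (auto simp: field_simps)
    ultimately have "f z - f x < f y - f z" using a b by (metis mult_strict_left_mono)
    then show ?thesis unfolding z_def[symmetric] by simp
  qed
  have cont: "continuous_on S (\<lambda>n. f n / (P - n))"
  proof -
    have "continuous_on S f"
      using df unfolding S_def
      by (intro continuous_at_imp_continuous_on ballI DERIV_isCont[OF df]) auto
    moreover have "\<And>n. n \<in> S \<Longrightarrow> P - n \<noteq> 0" unfolding S_def by auto
    ultimately show ?thesis by (auto intro!: continuous_intros)
  qed
  have "S \<noteq> {}" using budget unfolding S_def P_def by auto
  from continuous_attains_inf[OF _ this cont] obtain x where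
    x: "x \<in> S" "\<forall>y\<in>S. f x / (P - x) \<le> f y / (P - y)" unfolding S_def by auto
  have uniq: "a = b" if a: "a \<in> S" "\<forall>y\<in>S. f a / (P - a) \<le> f y / (P - y)"
     and b: "b \<in> S" "\<forall>y\<in>S. f b / (P - b) \<le> f y / (P - y)" for a b
  proof (rule ccontr)
    assume "a \<noteq> b"
    have key: False if "x \<in> S" "y \<in> S" "x < y" "\<forall>m\<in>S. f x / (P - x) \<le> f m / (P - m)"
       "\<forall>m\<in>S. f y / (P - y) \<le> f m / (P - m)" for x y
    proof -
      define t where "t = f x / (P - x)"
      have px: "P - x > 0" "P - y > 0" using that unfolding S_def by auto
      have t2: "f y / (P - y) = t" using that unfolding t_def by (meson order_antisym)
      have fx: "f x = t * (P - x)" unfolding t_def using px by simp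
      have fy: "f y = t * (P - y)" using t2 px by (simp add: field_simps)
      define z where "z = (x + y) / 2"
      have zS: "z \<in> S" using that unfolding S_def z_def by auto
      have pz: "P - z > 0" using zS unfolding S_def by auto
      have "f z < (f x + f y) / 2" using fmid[OF that(1,2,3)] unfolding z_def .
      also have "(f x + f y) / 2 = t * (P - z)" unfolding fx fy z_def by (simp add: field_simps)
      finally have "f z < t * (P - z)" .
      then have "f z / (P - z) < t" using pz by (simp add: field_simps)
      moreover have "t \<le> f z / (P - z)" using that(4) zS unfolding t_def by blast
      ultimately show False by simp
    qed
    show False
    proof (cases "a < b")
      case True then show ?thesis using key[OF a(1) b(1) True a(2) b(2)] by simp
    next
      case False then have "b < a" using \<open>a \<noteq> b\<close> by simp
      then show ?thesis using key[OF b(1) a(1) _ b(2) a(2)] by simp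
    qed
  qed
  show ?thesis
    unfolding u_eq P_def[symmetric] S_def[symmetric]
    using x uniq by blast
qed

end
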